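(* Let $\tilde L$ be a minimum-size counterexample. Let $L'\subseteq\tilde L$ be a subset which, with the order inherited from $\tilde L$, is a lattice (with least element $0_{L'}$ and greatest element $1_{L'}$), and suppose that at least one of the following holds: (i) $3<|L'|<8$; (ii) $2<|L'|<|\tilde L|-2$ and $d\le 1_{L'}$ for some dual atom $d$ of $\tilde L$. Then there exist $x\in L'\setminus\{0_{L'},1_{L'}\}$ and $y\in\tilde L\setminus L'$ such that, in $\tilde L$, $x$ upper covers $y$ or $x$ lower covers $y$.
   Context: For a poset $P$, $x$ upper covers $y$ (and $y$ lower covers $x$) if $y<x$ with nothing strictly between. Join-irreducible: upper covers exactly one element. A dual atom of a finite lattice is an element lower covered by... i.e. an element that the greatest element upper covers. For $x\in P$, ${\uparrow}x=\{y: x\le y\}$. A counterexample is a finite lattice $L$ with $|L|>1$ in which every join-irreducible $j$ satisfies $|{\uparrow}j|>|L|/2$; a minimum-size counterexample is a counterexample $\tilde L$ such that no counterexample has fewer elements. *)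

theory Defs
  imports Main
begin

definition is_poset :: "'a set \<Rightarrow> ('a \<Rightarrow> 'a \<Rightarrow> bool) \<Rightarrow> bool" where
  "is_poset A le \<longleftrightarrow>
     (\<forall>x\<in>A. le x x) \<and>
     (\<forall>x\<in>A. \<forall>y\<in>A. le x y \<and> le y x \<longrightarrow> x = y) \<and>
     (\<forall>x\<in>A. \<forall>y\<in>A. \<forall>z\<in>A. le x y \<and> le y z \<longrightarrow> le x z)"

definition is_lub :: "'a set \<Rightarrow> ('a \<Rightarrow> 'a \<Rightarrow> bool) \<Rightarrow> 'a \<Rightarrow> 'a \<Rightarrow> 'a \<Rightarrow> bool" where
  "is_lub A le x y s \<longleftrightarrow> s \<in> A \<and> le x s \<and> le y s \<and>
     (\<forall>u\<in>A. le x u \<and> le y u \<longrightarrow> le s u)"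

definition is_glb :: "'a set \<Rightarrow> ('a \<Rightarrow> 'a \<Rightarrow> bool) \<Rightarrow> 'a \<Rightarrow> 'a \<Rightarrow> 'a \<Rightarrow> bool" where
  "is_glb A le x y s \<longleftrightarrow> s \<in> A \<and> le s x \<and> le s y \<and>
     (\<forall>u\<in>A. le u x \<and> le u y \<longrightarrow> le u s)"

definition is_lattice :: "'a set \<Rightarrow> ('a \<Rightarrow> 'a \<Rightarrow> bool) \<Rightarrow> bool" where
  "is_lattice A le \<longleftrightarrow> A \<noteq> {} \<and> is_poset A le \<and>
     (\<forall>x\<in>A. \<forall>y\<in>A. (\<exists>s. is_lub A le x y s) \<and> (\<exists>t. is_glb A le x y t))"

definition upper_covers :: "'a set \<Rightarrow> ('a \<Rightarrow> 'a \<Rightarrow> bool) \<Rightarrow> 'a \<Rightarrow> 'a \<Rightarrow> bool" where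
  "upper_covers A le x y \<longleftrightarrow> x \<in> A \<and> y \<in> A \<and> le y x \<and> y \<noteq> x \<and>
     \<not> (\<exists>z\<in>A. le y z \<and> z \<noteq> y \<and> le z x \<and> z \<noteq> x)"

definition join_irreducible :: "'a set \<Rightarrow> ('a \<Rightarrow> 'a \<Rightarrow> bool) \<Rightarrow> 'a \<Rightarrow> bool" where
  "join_irreducible A le j \<longleftrightarrow> j \<in> A \<and> card {y \<in> A. upper_covers A le j y} = 1"

definition up_set :: "'a set \<Rightarrow> ('a \<Rightarrow> 'a \<Rightarrow> bool) \<Rightarrow> 'a \<Rightarrow> 'a set" where
  "up_set A le x = {y \<in> A. le x y}"

definition bottom :: "'a set \<Rightarrow> ('a \<Rightarrow> 'a \<Rightarrow> bool) \<Rightarrow> 'a" where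
  "bottom A le = (THE b. b \<in> A \<and> (\<forall>x\<in>A. le b x))"

definition top_el :: "'a set \<Rightarrow> ('a \<Rightarrow> 'a \<Rightarrow> bool) \<Rightarrow> 'a" where
  "top_el A le = (THE t. t \<in> A \<and> (\<forall>x\<in>A. le x t))"

definition dual_atom :: "'a set \<Rightarrow> ('a \<Rightarrow> 'a \<Rightarrow> bool) \<Rightarrow> 'a \<Rightarrow> bool" where
  "dual_atom A le d \<longleftrightarrow> upper_covers A le (top_el A le) d"

definition counterexample :: "'a set \<Rightarrow> ('a \<Rightarrow> 'a \<Rightarrow> bool) \<Rightarrow> bool" where
  "counterexample A le \<longleftrightarrow> finite A \<and> is_lattice A le \<and> card A > 1 \<and>
     (\<forall>j. join_irreducible A le j \<longrightarrow> 2 * card (up_set A le j) > card A)"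

text \<open>Since every
  finite lattice is isomorphic to one whose carrier is a set of naturals, it suffices
  to quantify over lattices carried by subsets of nat.\<close>
definition min_counterexample :: "'a set \<Rightarrow> ('a \<Rightarrow> 'a \<Rightarrow> bool) \<Rightarrow> bool" where
  "min_counterexample A le \<longleftrightarrow> counterexample A le \<and>
     (\<forall>(B :: nat set) le'. counterexample B le' \<longrightarrow> card A \<le> card B)"

end

theory Submission
  imports Defs
begin


lemma flip_poset: "is_poset A le \<Longrightarrow> is_poset A (\<lambda>x y. le y x)"
  unfolding is_poset_def by blast

lemma po_refl: "is_poset A le \<Longrightarrow> x \<in> A \<Longrightarrow> le x x"
  unfolding is_poset_def by blast
lemma po_antisym: "is_poset A le \<Longrightarrow> x \<in> A \<Longrightarrow> y \<in> A \<Longrightarrow> le x y \<Longrightarrow> le y x \<Longrightarrow> x = y"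
  unfolding is_poset_def by blast
lemma po_trans: "is_poset A le \<Longrightarrow> x \<in> A \<Longrightarrow> y \<in> A \<Longrightarrow> z \<in> A \<Longrightarrow> le x y \<Longrightarrow> le y z \<Longrightarrow> le x z"
  unfolding is_poset_def by meson

lemma flip_covers: "upper_covers A (\<lambda>x y. le y x) x y = upper_covers A le y x"
  unfolding upper_covers_def by blast

lemma flip_lattice: "is_lattice A le \<Longrightarrow> is_lattice A (\<lambda>x y. le y x)"
  unfolding is_lattice_def is_lub_def is_glb_def
  apply (intro conjI)
    apply blast
   apply (simp add: flip_poset)
  by blast

lemma bottom_flip: "bottom A le = top_el A (\<lambda>x y. le y x)"
  unfolding bottom_def top_el_def by simp

lemma ex_max_nat:
  fixes f :: "'b \<Rightarrow> nat"
  assumes "finite S" "S \<noteq> {}"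
  shows "\<exists>z\<in>S. \<forall>w\<in>S. f w \<le> f z"
proof -
  have "finite (f ` S)" "f ` S \<noteq> {}" using assms by auto
  then have "Max (f ` S) \<in> f ` S" by (rule Max_in)
  then obtain z where z: "z \<in> S" "f z = Max (f ` S)" by auto
  have "\<forall>w\<in>S. f w \<le> f z" using z(2) Max_ge[OF \<open>finite (f ` S)\<close>] by simp
  then show ?thesis using z(1) by blast
qed

definition dn :: "'a set \<Rightarrow> ('a \<Rightarrow> 'a \<Rightarrow> bool) \<Rightarrow> 'a \<Rightarrow> 'a set" where
  "dn A le x = {y\<in>A. le y x}"

lemma dn_strict_mono:
  assumes po: "is_poset A le" and fin: "finite A"
    and z: "z \<in> A" and w: "w \<in> A" and "le z w" "z \<noteq> w"
  shows "card (dn A le z) < card (dn A le w)"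
proof (rule psubset_card_mono)
  show "finite (dn A le w)" using fin unfolding dn_def by auto
  show "dn A le z \<subset> dn A le w"
  proof
    show "dn A le z \<subseteq> dn A le w" using po assms unfolding dn_def is_poset_def by blast
    have "w \<notin> dn A le z" using po assms unfolding dn_def is_poset_def by blast
    moreover have "w \<in> dn A le w" using po w unfolding dn_def is_poset_def by blast
    ultimately show "dn A le z \<noteq> dn A le w" by blast
  qed
qed

lemma chain_down:
  assumes po: "is_poset A le" and fin: "finite A"
    and x: "x \<in> A" and y: "y \<in> A" and "le y x" "y \<noteq> x"
  shows "\<exists>z\<in>A. upper_covers A le x z \<and> le y z"
proof -
  let ?S = "{z\<in>A. le y z \<and> le z x \<and> z \<noteq> x}"
  have "le y y" using po y unfolding is_poset_def by blast
  then have "y \<in> ?S" using assms by blast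
  then have "finite ?S" "?S \<noteq> {}" using fin by auto
  from ex_max_nat[OF this, of "\<lambda>z. card (dn A le z)"]
  obtain z where z: "z \<in> ?S" and mx: "\<forall>w\<in>?S. card (dn A le w) \<le> card (dn A le z)" by blast
  have "upper_covers A le x z"
    unfolding upper_covers_def
  proof (intro conjI)
    show "\<not> (\<exists>w\<in>A. le z w \<and> w \<noteq> z \<and> le w x \<and> w \<noteq> x)"
    proof
      assume "\<exists>w\<in>A. le z w \<and> w \<noteq> z \<and> le w x \<and> w \<noteq> x"
      then obtain w where w: "w \<in> A" "le z w" "w \<noteq> z" "le w x" "w \<noteq> x" by blast
      have "le y w" using po_trans[OF po y _ w(1)] z w by blast
      then have "w \<in> ?S" using w by blast
      have "card (dn A le z) < card (dn A le w)"
        using dn_strict_mono[OF po fin _ w(1) w(2)] w z by auto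
      with mx \<open>w \<in> ?S\<close> show False by force
    qed
  qed (use x z in auto)
  then show ?thesis using z by blast
qed

lemma chain_up:
  assumes po: "is_poset A le" and fin: "finite A"
    and x: "x \<in> A" and y: "y \<in> A" and yx: "le y x" and ne: "y \<noteq> x"
  shows "\<exists>z\<in>A. upper_covers A le z y \<and> le z x"
proof -
  have "\<exists>z\<in>A. upper_covers A (\<lambda>x y. le y x) y z \<and> le z x"
    using chain_down[OF flip_poset[OF po] fin y x yx ne[symmetric]] .
  then show ?thesis unfolding flip_covers[of A le] .
qed




lemma lat_poset: "is_lattice A le \<Longrightarrow> is_poset A le"
  unfolding is_lattice_def by blast

lemma top_unique:
  assumes "is_poset A le" "t \<in> A" "\<forall>x\<in>A. le x t"
  shows "top_el A le = t"
  unfolding top_el_def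
proof (rule the_equality)
  show "t \<in> A \<and> (\<forall>x\<in>A. le x t)" using assms by blast
  fix t' assume "t' \<in> A \<and> (\<forall>x\<in>A. le x t')"
  then show "t' = t" using assms po_antisym[OF assms(1)] by blast
qed

lemma lat_top:
  assumes fin: "finite A" and lat: "is_lattice A le"
  shows "top_el A le \<in> A \<and> (\<forall>x\<in>A. le x (top_el A le))"
proof -
  have po: "is_poset A le" using lat by (rule lat_poset)
  have "A \<noteq> {}" using lat unfolding is_lattice_def by blast
  from ex_max_nat[OF fin this, of "\<lambda>z. card (dn A le z)"]
  obtain t where t: "t \<in> A" and mx: "\<forall>w\<in>A. card (dn A le w) \<le> card (dn A le t)" by blast
  have all: "\<forall>x\<in>A. le x t"
  proof
    fix x assume x: "x \<in> A"
    obtain s where s: "is_lub A le x t s" using lat x t unfolding is_lattice_def by blast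
    have "s \<in> A" "le x s" "le t s" using s unfolding is_lub_def by auto
    show "le x t"
    proof (cases "s = t")
      case True then show ?thesis using \<open>le x s\<close> by simp
    next
      case False
      then have "card (dn A le t) < card (dn A le s)"
        using dn_strict_mono[OF po fin t \<open>s \<in> A\<close> \<open>le t s\<close>] by simp
      with mx \<open>s \<in> A\<close> show ?thesis by force
    qed
  qed
  have "top_el A le = t" using top_unique[OF po t all] .
  then show ?thesis using t all by simp
qed

lemma lat_bot:
  assumes fin: "finite A" and lat: "is_lattice A le"
  shows "bottom A le \<in> A \<and> (\<forall>x\<in>A. le (bottom A le) x)"
  using lat_top[OF fin flip_lattice[OF lat]] by (simp add: bottom_flip)

lemma sub_lattice:
  assumes lat: "is_lattice A le" and sub: "B \<subseteq> A" and ne: "B \<noteq> {}"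
    and cj: "\<And>x y s. x \<in> B \<Longrightarrow> y \<in> B \<Longrightarrow> is_lub A le x y s \<Longrightarrow> s \<in> B"
    and cm: "\<And>x y s. x \<in> B \<Longrightarrow> y \<in> B \<Longrightarrow> is_glb A le x y s \<Longrightarrow> s \<in> B"
  shows "is_lattice B le"
proof -
  have "is_poset B le" using lat_poset[OF lat] sub unfolding is_poset_def by blast
  moreover have "(\<exists>s. is_lub B le x y s) \<and> (\<exists>t. is_glb B le x y t)" if x: "x \<in> B" and y: "y \<in> B" for x y
  proof -
  obtain s where s: "is_lub A le x y s" using lat x y sub unfolding is_lattice_def by blast
  obtain t where t: "is_glb A le x y t" using lat x y sub unfolding is_lattice_def by blast
  have "s \<in> B" "t \<in> B" using cj[OF x y s] cm[OF x y t] by auto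
  then show ?thesis
    using s t sub unfolding is_lub_def is_glb_def by blast
  qed
  ultimately show ?thesis using ne unfolding is_lattice_def by blast
qed

lemma covers_sub:
  "upper_covers A le x y \<Longrightarrow> B \<subseteq> A \<Longrightarrow> x \<in> B \<Longrightarrow> y \<in> B \<Longrightarrow> upper_covers B le x y"
  unfolding upper_covers_def by blast

lemma up_set_top:
  assumes po: "is_poset A le" and c: "upper_covers A le t c" and top: "\<And>x. x \<in> A \<Longrightarrow> le x t"
  shows "up_set A le c = {c, t}"
proof -
  have cA: "c \<in> A" "t \<in> A" "le c t" "c \<noteq> t" and nz: "\<And>z. z \<in> A \<Longrightarrow> le c z \<Longrightarrow> z \<noteq> c \<Longrightarrow> le z t \<Longrightarrow> z = t"
    using c unfolding upper_covers_def by auto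
  have rf: "le c c" using po cA unfolding is_poset_def by blast
  have "\<And>z. z \<in> A \<Longrightarrow> le c z \<Longrightarrow> z = c \<or> z = t" using nz top by blast
  then show ?thesis unfolding up_set_def using cA rf by auto
qed

lemma bot_not_ji:
  assumes "\<forall>x\<in>A. le b x" "b \<in> A" and po: "is_poset A le"
  shows "\<not> join_irreducible A le b"
proof -
  have E: "{y \<in> A. upper_covers A le b y} = {}"
    using assms po_antisym[OF po] unfolding upper_covers_def by blast
  show ?thesis unfolding join_irreducible_def E by simp
qed




lemma transfer:
  fixes L :: "'b set" and K :: "'a set"
  assumes min: "min_counterexample L leL" and fin: "finite K" and lat: "is_lattice K le"
    and c1: "card K > 1" and lt: "card K < card L"
  shows "\<exists>j. join_irreducible K le j \<and> 2 * card (up_set K le j) \<le> card K"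
proof (rule ccontr)
  assume nc: "\<not> ?thesis"
  obtain f where bij: "bij_betw f {0..<card K} K" using ex_bij_betw_nat_finite[OF fin] by blast
  define B where "B = {0..<card K}"
  define le' where "le' = (\<lambda>i j. le (f i) (f j))"
  define g where "g = inv_into B f"
  have fB: "\<And>k. k \<in> B \<Longrightarrow> f k \<in> K" using bij unfolding B_def bij_betw_def by auto
  have imgB: "f ` B = K" using bij unfolding B_def bij_betw_def by auto
  have gK: "\<And>y. y \<in> K \<Longrightarrow> g y \<in> B \<and> f (g y) = y"
    using imgB unfolding g_def by (metis inv_into_into f_inv_into_f)
  have inj: "inj_on f B" using bij unfolding B_def bij_betw_def by auto
  have inj': "\<And>i j. i \<in> B \<Longrightarrow> j \<in> B \<Longrightarrow> f i = f j \<longleftrightarrow> i = j" using inj unfolding inj_on_def by blast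
  have exB: "\<And>P. (\<exists>k\<in>B. P (f k)) \<longleftrightarrow> (\<exists>y\<in>K. P y)" using fB gK by metis
  have allB: "\<And>P. (\<forall>k\<in>B. P (f k)) \<longleftrightarrow> (\<forall>y\<in>K. P y)" using fB gK by metis
  have cardB: "\<And>P. card {k\<in>B. P (f k)} = card {y\<in>K. P y}"
  proof -
    fix P
    have "f ` {k\<in>B. P (f k)} = {y\<in>K. P y}"
      using fB gK by (auto intro!: image_eqI)
    moreover have "inj_on f {k\<in>B. P (f k)}" using inj by (rule inj_on_subset) auto
    ultimately show "card {k\<in>B. P (f k)} = card {y\<in>K. P y}" by (metis card_image)
  qed
  have cov: "\<And>i k. i \<in> B \<Longrightarrow> k \<in> B \<Longrightarrow> upper_covers B le' i k \<longleftrightarrow> upper_covers K le (f i) (f k)"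
  proof -
    fix i k assume i: "i \<in> B" and k: "k \<in> B"
    have "(\<exists>z\<in>B. le' k z \<and> z \<noteq> k \<and> le' z i \<and> z \<noteq> i) \<longleftrightarrow>
          (\<exists>z\<in>B. le (f k) (f z) \<and> f z \<noteq> f k \<and> le (f z) (f i) \<and> f z \<noteq> f i)"
      unfolding le'_def using inj' i k by blast
    also have "\<dots> \<longleftrightarrow> (\<exists>z\<in>K. le (f k) z \<and> z \<noteq> f k \<and> le z (f i) \<and> z \<noteq> f i)"
      by (rule exB)
    finally show "upper_covers B le' i k \<longleftrightarrow> upper_covers K le (f i) (f k)"
      unfolding upper_covers_def using i k fB inj' unfolding le'_def by auto
  qed
  have ji: "\<And>i. join_irreducible B le' i \<Longrightarrow> join_irreducible K le (f i)"
  proof -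
    fix i assume a: "join_irreducible B le' i"
    then have i: "i \<in> B" unfolding join_irreducible_def by auto
    have "{k\<in>B. upper_covers B le' i k} = {k\<in>B. upper_covers K le (f i) (f k)}"
      using cov i by auto
    then have "card {y\<in>K. upper_covers K le (f i) y} = 1"
      using a cardB[of "\<lambda>y. upper_covers K le (f i) y"] unfolding join_irreducible_def by simp
    then show "join_irreducible K le (f i)" unfolding join_irreducible_def using fB i by simp
  qed
  have up: "\<And>i. i \<in> B \<Longrightarrow> card (up_set B le' i) = card (up_set K le (f i))"
    unfolding up_set_def le'_def using cardB by simp
  have cB: "card B = card K" unfolding B_def by simp
  have latB: "is_lattice B le'"
  proof -
    have "B \<noteq> {}" using c1 unfolding B_def by auto
    moreover have "is_poset B le'"
    proof -
      have poK: "is_poset K le" using lat by (rule lat_poset)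
      have r: "\<forall>x\<in>B. le' x x" unfolding le'_def using po_refl[OF poK] fB by blast
      have a: "\<forall>x\<in>B. \<forall>y\<in>B. le' x y \<and> le' y x \<longrightarrow> x = y"
        unfolding le'_def using po_antisym[OF poK] fB inj' by blast
      have t: "\<forall>x\<in>B. \<forall>y\<in>B. \<forall>z\<in>B. le' x y \<and> le' y z \<longrightarrow> le' x z"
        unfolding le'_def using po_trans[OF poK] fB by blast
      show ?thesis unfolding is_poset_def using r a t by blast
    qed
    moreover have "(\<exists>s. is_lub B le' i j s) \<and> (\<exists>t. is_glb B le' i j t)" if "i \<in> B" "j \<in> B" for i j
    proof -
      have fij: "f i \<in> K" "f j \<in> K" using fB that by auto
      have "\<forall>x\<in>K. \<forall>y\<in>K. (\<exists>s. is_lub K le x y s) \<and> (\<exists>t. is_glb K le x y t)"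
        using lat unfolding is_lattice_def by blast
      then obtain s t where s: "is_lub K le (f i) (f j) s" and t: "is_glb K le (f i) (f j) t"
        using fij by blast
      have "is_lub B le' i j (g s)"
        using s gK allB[of "\<lambda>u. le (f i) u \<and> le (f j) u \<longrightarrow> le s u"]
        unfolding is_lub_def le'_def by auto
      moreover have "is_glb B le' i j (g t)"
        using t gK allB[of "\<lambda>u. le u (f i) \<and> le u (f j) \<longrightarrow> le u t"]
        unfolding is_glb_def le'_def by auto
      ultimately show ?thesis by blast
    qed
    ultimately show ?thesis unfolding is_lattice_def by blast
  qed
  have "counterexample B le'"
    unfolding counterexample_def
  proof (intro conjI allI impI)
    show "finite B" unfolding B_def by simp
    show "is_lattice B le'" by fact
    show "1 < card B" using cB c1 by simp
    fix i assume a: "join_irreducible B le' i"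
    then have "i \<in> B" unfolding join_irreducible_def by auto
    then show "card B < 2 * card (up_set B le' i)"
      using ji[OF a] nc up cB by (metis not_le)
  qed
  then have "card L \<le> card B" using min unfolding min_counterexample_def B_def by blast
  then show False using cB lt by simp
qed




definition block :: "'a set \<Rightarrow> ('a \<Rightarrow> 'a \<Rightarrow> bool) \<Rightarrow> 'a set \<Rightarrow> 'a \<Rightarrow> 'a \<Rightarrow> bool" where
  "block L le K a b \<longleftrightarrow> K \<subseteq> L \<and> a \<in> K \<and> b \<in> K \<and> a \<noteq> b \<and> (\<forall>y\<in>K. le a y \<and> le y b) \<and>
     (\<forall>x\<in>K-{a,b}. \<forall>y\<in>L-K. \<not> upper_covers L le x y \<and> \<not> upper_covers L le y x)"

lemma block_flip: "block L le K a b \<Longrightarrow> block L (\<lambda>x y. le y x) K b a"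
  unfolding block_def flip_covers[of L le] by (auto simp: insert_commute)

lemma F1:
  assumes po: "is_poset L le" and fin: "finite L" and bl: "block L le K a b"
    and x: "x \<in> K-{a,b}"
  shows "y \<in> L \<Longrightarrow> le x y \<Longrightarrow> y \<in> K-{a,b} \<or> le b y"
proof (induction "card (dn L le y)" arbitrary: y rule: less_induct)
  case less
  have xL: "x \<in> L" using bl x unfolding block_def by blast
  show ?case
  proof (cases "y = x")
    case True then show ?thesis using x by simp
  next
    case False
    obtain z where z: "z \<in> L" "upper_covers L le y z" "le x z"
      using chain_down[OF po fin less.prems(1) xL less.prems(2)] False by metis
    have zy: "le z y" "z \<noteq> y" using z(2) unfolding upper_covers_def by auto
    have "card (dn L le z) < card (dn L le y)"
      using dn_strict_mono[OF po fin z(1) less.prems(1) zy] .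
    then have ih: "z \<in> K-{a,b} \<or> le b z" using less.hyps z by blast
    show ?thesis
    proof (cases "le b z")
      case True
      have "b \<in> L" using bl unfolding block_def by blast
      then show ?thesis using po_refl[OF po] po_antisym[OF po] po_trans[OF po] True zy po z(1) less.prems(1) by blast
    next
      case False
      then have zI: "z \<in> K-{a,b}" using ih by blast
      have "y \<in> K" using bl zI z(2) less.prems(1) unfolding block_def by blast
      moreover have "y \<noteq> a"
      proof
        assume "y = a"
        then have "le x a" "le a x" using less.prems bl x unfolding block_def by auto
        then show False using po_refl[OF po] po_antisym[OF po] po_trans[OF po] po x xL bl unfolding block_def by blast
      qed
      moreover have "y = b \<Longrightarrow> le b y" using po_refl[OF po] po_antisym[OF po] po_trans[OF po] po less.prems(1) by blast
      ultimately show ?thesis by blast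
    qed
  qed
qed

lemma F2:
  assumes po: "is_poset L le" and fin: "finite L" and bl: "block L le K a b"
    and x: "x \<in> K-{a,b}" and "y \<in> L" "le y x"
  shows "y \<in> K-{a,b} \<or> le y a"
proof -
  have "y \<in> K-{b,a} \<or> le y a"
    using F1[OF flip_poset[OF po] fin block_flip[OF bl], of x y] x assms by auto
  then show ?thesis by blast
qed

lemma F3a:
  assumes po: "is_poset L le" and fin: "finite L" and bl: "block L le K a b"
    and x: "x \<in> K-{a,b}"
  shows "upper_covers L le x y \<longleftrightarrow> upper_covers K le x y"
proof
  have KL: "K \<subseteq> L" using bl unfolding block_def by blast
  show "upper_covers L le x y \<Longrightarrow> upper_covers K le x y"
  proof -
    assume c: "upper_covers L le x y"
    then have "y \<in> K" using bl x unfolding block_def upper_covers_def by blast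
    then show ?thesis using covers_sub[OF c KL] x by blast
  qed
  assume c: "upper_covers K le x y"
  have xL: "x \<in> L" "y \<in> L" using c KL unfolding upper_covers_def by auto
  show "upper_covers L le x y"
    unfolding upper_covers_def
  proof (intro conjI)
    show "\<not> (\<exists>z\<in>L. le y z \<and> z \<noteq> y \<and> le z x \<and> z \<noteq> x)"
    proof
      assume "\<exists>z\<in>L. le y z \<and> z \<noteq> y \<and> le z x \<and> z \<noteq> x"
      then obtain z where z: "z \<in> L" "le y z" "z \<noteq> y" "le z x" "z \<noteq> x" by blast
      obtain w where w: "w \<in> L" "upper_covers L le x w" "le z w"
        using chain_down[OF po fin xL(1) z(1) z(4) z(5)] by blast
      have wK: "w \<in> K" using w bl x unfolding block_def by blast
      have "le y w" using po_refl[OF po] po_antisym[OF po] po_trans[OF po] po z w xL by blast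
      moreover have "w \<noteq> y" using po_refl[OF po] po_antisym[OF po] po_trans[OF po] po z w xL by blast
      moreover have "le w x" "w \<noteq> x" using w(2) unfolding upper_covers_def by auto
      ultimately show False using c wK unfolding upper_covers_def by blast
    qed
  qed (use c xL in \<open>auto simp: upper_covers_def\<close>)
qed

lemma F3b:
  assumes po: "is_poset L le" and fin: "finite L" and bl: "block L le K a b"
    and x: "x \<in> K-{a,b}"
  shows "upper_covers L le y x \<longleftrightarrow> upper_covers K le y x"
  using F3a[OF flip_poset[OF po] fin block_flip[OF bl], of x y] x unfolding flip_covers[of L le] flip_covers[of K le] by auto

lemma F3_ji:
  assumes po: "is_poset L le" and fin: "finite L" and bl: "block L le K a b"
    and x: "x \<in> K-{a,b}"
  shows "join_irreducible L le x \<longleftrightarrow> join_irreducible K le x"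
proof -
  have "{y\<in>L. upper_covers L le x y} = {y\<in>K. upper_covers K le x y}"
    using F3a[OF assms] unfolding upper_covers_def by blast
  moreover have "x \<in> L" "x \<in> K" using bl x unfolding block_def by auto
  ultimately show ?thesis unfolding join_irreducible_def by simp
qed

lemma F4:
  assumes po: "is_poset L le" and fin: "finite L" and bl: "block L le K a b"
    and x: "x \<in> K-{a,b}"
  shows "card (up_set L le x) + 1 = card (up_set K le x) + card (up_set L le b)"
proof -
  have KL: "K \<subseteq> L" and bK: "b \<in> K" and xK: "x \<in> K" and xb: "le x b"
    using bl x unfolding block_def by auto
  have e1: "up_set L le x = up_set K le x \<union> up_set L le b"
  proof
    show "up_set L le x \<subseteq> up_set K le x \<union> up_set L le b"
      using F1[OF po fin bl x] unfolding up_set_def by blast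
    show "up_set K le x \<union> up_set L le b \<subseteq> up_set L le x"
      using po_refl[OF po] po_antisym[OF po] po_trans[OF po] KL xb po xK bK unfolding up_set_def by blast
  qed
  have e2: "up_set K le x \<inter> up_set L le b = {b}"
  proof
    show "up_set K le x \<inter> up_set L le b \<subseteq> {b}"
    proof
      fix y assume "y \<in> up_set K le x \<inter> up_set L le b"
      then have "y \<in> K" "le b y" unfolding up_set_def by auto
      moreover have "le y b" using bl \<open>y \<in> K\<close> unfolding block_def by blast
      ultimately show "y \<in> {b}" using po_antisym[OF po] KL bK by blast
    qed
    show "{b} \<subseteq> up_set K le x \<inter> up_set L le b"
      using bK KL xb po_refl[OF po] unfolding up_set_def by auto
  qed
  have f: "finite (up_set K le x)" "finite (up_set L le b)"
    using fin KL finite_subset unfolding up_set_def by fastforce+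
  show ?thesis using card_Un_Int[OF f] e1 e2 by simp
qed




lemma L1_lattice:
  assumes lat: "is_lattice L le" and fin: "finite L" and bl: "block L le K a b"
  shows "is_lattice (L - (K-{a,b})) le"
proof (rule sub_lattice[OF lat])
  have po: "is_poset L le" using lat by (rule lat_poset)
  have ab: "a \<in> L" "b \<in> L" "a \<noteq> b" "le a b" using bl unfolding block_def by auto
  show "L - (K-{a,b}) \<subseteq> L" by blast
  show "L - (K-{a,b}) \<noteq> {}" using ab by blast
  fix x y s assume x: "x \<in> L - (K-{a,b})" and y: "y \<in> L - (K-{a,b})"
  {
    assume s: "is_lub L le x y s"
    show "s \<in> L - (K-{a,b})"
    proof (rule ccontr)
      assume "s \<notin> L - (K-{a,b})"
      then have sI: "s \<in> K-{a,b}" using s unfolding is_lub_def by blast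
      have "le x a" using F2[OF po fin bl sI, of x] x s unfolding is_lub_def by blast
      moreover have "le y a" using F2[OF po fin bl sI, of y] y s unfolding is_lub_def by blast
      ultimately have "le s a" using s ab unfolding is_lub_def by blast
      moreover have "le a s" using bl sI unfolding block_def by blast
      ultimately show False using po_refl[OF po] po_antisym[OF po] po_trans[OF po] po sI ab s unfolding is_lub_def by blast
    qed
  }
  {
    assume s: "is_glb L le x y s"
    show "s \<in> L - (K-{a,b})"
    proof (rule ccontr)
      assume "s \<notin> L - (K-{a,b})"
      then have sI: "s \<in> K-{a,b}" using s unfolding is_glb_def by blast
      have "le b x" using F1[OF po fin bl sI, of x] x s unfolding is_glb_def by blast
      moreover have "le b y" using F1[OF po fin bl sI, of y] y s unfolding is_glb_def by blast
      ultimately have "le b s" using s ab unfolding is_glb_def by blast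
      moreover have "le s b" using bl sI unfolding block_def by blast
      ultimately show False using po_refl[OF po] po_antisym[OF po] po_trans[OF po] po sI ab s unfolding is_glb_def by blast
    qed
  }
qed

lemma L1_covers:
  assumes po: "is_poset L le" and fin: "finite L" and bl: "block L le K a b"
    and j: "j \<in> L - (K-{a,b})" and jb: "j \<noteq> b"
  shows "{y\<in>L. upper_covers L le j y} = {y \<in> L - (K-{a,b}). upper_covers (L - (K-{a,b})) le j y}"
proof (rule set_eqI)
  have ab: "a \<in> L" "b \<in> L" "a \<noteq> b" "le a b" "a \<in> K" "b \<in> K" using bl unfolding block_def by auto
  fix y
  show "y \<in> {y\<in>L. upper_covers L le j y} \<longleftrightarrow> y \<in> {y \<in> L - (K-{a,b}). upper_covers (L - (K-{a,b})) le j y}"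
  proof
    assume "y \<in> {y\<in>L. upper_covers L le j y}"
    then have y: "y \<in> L" "upper_covers L le j y" by auto
    have nI: "y \<notin> K-{a,b}"
    proof
      assume yI: "y \<in> K-{a,b}"
      show False
      proof (cases "j \<in> K")
        case True
        then have "j = a" using j jb by blast
        then have "le y a" "le a y" "y \<noteq> a" using y yI bl unfolding upper_covers_def block_def by auto
        then show False using po_antisym[OF po] ab y by blast
      next
        case False
        then show False using bl yI y j unfolding block_def by blast
      qed
    qed
    then have "y \<in> L - (K-{a,b})" using y by blast
    moreover have "upper_covers (L - (K - {a, b})) le j y"
      using covers_sub[OF y(2), of "L - (K-{a,b})"] j \<open>y \<in> L - (K-{a,b})\<close> by blast
    ultimately show "y \<in> {y \<in> L - (K-{a,b}). upper_covers (L - (K-{a,b})) le j y}" by blast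
  next
    assume "y \<in> {y \<in> L - (K-{a,b}). upper_covers (L - (K-{a,b})) le j y}"
    then have y: "y \<in> L" "y \<notin> K - {a,b}" "upper_covers (L - (K-{a,b})) le j y" by auto
    have yj: "le y j" "y \<noteq> j" "j \<in> L" using y(3) unfolding upper_covers_def by auto
    have "\<not> (\<exists>z\<in>L. le y z \<and> z \<noteq> y \<and> le z j \<and> z \<noteq> j)"
    proof
      assume "\<exists>z\<in>L. le y z \<and> z \<noteq> y \<and> le z j \<and> z \<noteq> j"
      then obtain w where w: "w \<in> L" "le y w" "w \<noteq> y" "le w j" "w \<noteq> j" by blast
      have wI: "w \<in> K-{a,b}" using w y(3) unfolding upper_covers_def by blast
      have "le b j" using F1[OF po fin bl wI, of j] j w by blast
      moreover have "le y a" using F2[OF po fin bl wI, of y] y w by blast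
      moreover have "y \<noteq> b"
      proof
        assume "y = b" then have "le b a" using \<open>le y a\<close> by simp
        then show False using po_antisym[OF po] ab by blast
      qed
      moreover have "le y b" using po_trans[OF po y(1) ab(1) ab(2)] \<open>le y a\<close> ab by blast
      moreover have "b \<in> L - (K-{a,b})" using ab by blast
      ultimately show False using y(3) jb unfolding upper_covers_def by blast
    qed
    then have "upper_covers L le j y" using y yj unfolding upper_covers_def by blast
    then show "y \<in> {y\<in>L. upper_covers L le j y}" using y by blast
  qed
qed

lemma CORE:
  assumes min: "min_counterexample L le" and bl: "block L le K a b"
    and x: "x \<in> K-{a,b}" and xji: "join_irreducible K le x"
    and xs: "2 * card (up_set K le x) \<le> card K"
  shows False
proof -
  have ce: "counterexample L le" using min unfolding min_counterexample_def by blast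
  then have fin: "finite L" and lat: "is_lattice L le" and ceJ: "\<And>j. join_irreducible L le j \<Longrightarrow> card L < 2 * card (up_set L le j)"
    unfolding counterexample_def by auto
  have po: "is_poset L le" using lat by (rule lat_poset)
  have ab: "a \<in> K" "b \<in> K" "a \<noteq> b" "le a b" "K \<subseteq> L" using bl unfolding block_def by auto
  define I where "I = K - {a,b}"
  define L1 where "L1 = L - I"
  have finK: "finite K" using fin ab finite_subset by blast
  have "card {a,b} \<le> card K" using ab finK by (intro card_mono) auto
  then have cardI: "card I + 2 = card K" unfolding I_def using ab finK
    by (simp add: card_Diff_subset)
  have IL: "I \<subseteq> L" "finite I" using ab finK unfolding I_def by auto
  have cardL1: "card L1 + card I = card L" unfolding L1_def using IL fin
    by (metis card_Diff_subset le_add_diff_inverse2 card_mono)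
  have mpos: "card I \<ge> 1" using x IL unfolding I_def
    by (metis One_nat_def Suc_leI card_gt_0_iff empty_iff)
  have latL1: "is_lattice L1 le" unfolding L1_def I_def by (rule L1_lattice[OF lat fin bl])
  have finL1: "finite L1" unfolding L1_def using fin by simp
  have abL1: "a \<in> L1" "b \<in> L1" using ab unfolding L1_def I_def by auto
  have "card {a,b} \<le> card L1" using abL1 finL1 by (intro card_mono) auto
  then have c1: "card L1 > 1" using ab by simp
  have lt: "card L1 < card L" using cardL1 mpos by simp
  obtain j where j: "join_irreducible L1 le j" and js: "2 * card (up_set L1 le j) \<le> card L1"
    using transfer[OF min finL1 latL1 c1 lt] by blast
  have jL1: "j \<in> L1" using j unfolding join_irreducible_def by blast
  define U where "U = up_set L le b"
  have UI: "U \<inter> I = {}" using po_refl[OF po] po_antisym[OF po] po_trans[OF po] ab po unfolding U_def I_def up_set_def block_def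
    using bl unfolding block_def by blast
  have finU: "finite U" unfolding U_def up_set_def using fin by simp
  have Ubound: "2 * card U \<le> card L1"
  proof (cases "j = b")
    case True
    have "up_set L1 le j = U" using True UI unfolding L1_def U_def up_set_def by blast
    then show ?thesis using js by simp
  next
    case False
    have cv: "{y\<in>L. upper_covers L le j y} = {y \<in> L1. upper_covers L1 le j y}"
      using L1_covers[OF po fin bl _ False] jL1 unfolding L1_def I_def by blast
    have jiL: "join_irreducible L le j" using j cv jL1 unfolding join_irreducible_def L1_def by simp
    show ?thesis
    proof (cases "le j a")
      case True
      have "insert a U \<subseteq> up_set L1 le j"
      proof
        fix y assume "y \<in> insert a U"
        then consider "y = a" | "y \<in> L" "le b y" unfolding U_def up_set_def by blast
        then show "y \<in> up_set L1 le j"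
        proof cases
          case 1 then show ?thesis using True abL1 unfolding up_set_def by blast
        next
          case 2
          have jL: "j \<in> L" using jL1 unfolding L1_def by blast
          have "le j b" using po_trans[OF po jL _ _ True] ab by blast
          then have "le j y" using po_trans[OF po jL _ 2(1) _ 2(2)] ab by blast
          moreover have "y \<in> L1" using 2 UI unfolding U_def up_set_def L1_def by blast
          ultimately show ?thesis unfolding up_set_def by blast
        qed
      qed
      moreover have "a \<notin> U" using po_refl[OF po] po_antisym[OF po] po_trans[OF po] ab po unfolding U_def up_set_def by blast
      ultimately have "card U + 1 \<le> card (up_set L1 le j)"
        using finU finL1 card_mono[of "up_set L1 le j" "insert a U"] unfolding up_set_def
        by simp
      then show ?thesis using js by simp
    next
      case False
      have "up_set L1 le j = up_set L le j"
        using F2[OF po fin bl] False jL1 unfolding L1_def I_def up_set_def by blast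
      then show ?thesis using js ceJ[OF jiL] lt by simp
    qed
  qed
  have xI: "x \<in> K - {a,b}" by fact
  have "join_irreducible L le x" using F3_ji[OF po fin bl xI] xji by simp
  then have "card L < 2 * card (up_set L le x)" by (rule ceJ)
  moreover have "card (up_set L le x) + 1 = card (up_set K le x) + card U"
    using F4[OF po fin bl xI] unfolding U_def .
  ultimately show False using xs Ubound cardI cardL1 by simp
qed




lemma ex_other:
  assumes "finite C" "c1 \<in> C" "card C \<noteq> 1"
  shows "\<exists>c2\<in>C. c2 \<noteq> c1"
proof (rule ccontr)
  assume "\<not> ?thesis"
  then have "C = {c1}" using assms by blast
  then show False using assms by simp
qed

lemma SL0:
  assumes fin: "finite K" and lat: "is_lattice K le"
    and c2: "card K \<ge> 2" and c7: "card K \<le> 7"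
    and nji: "\<not> join_irreducible K le (top_el K le)"
  shows "\<exists>x \<in> K - {bottom K le, top_el K le}. join_irreducible K le x \<and> 2 * card (up_set K le x) \<le> card K"
proof -
  define t where "t = top_el K le"
  define bo where "bo = bottom K le"
  have po: "is_poset K le" using lat by (rule lat_poset)
  have refl: "\<And>x. x \<in> K \<Longrightarrow> le x x" using po unfolding is_poset_def by blast
  have anti: "\<And>x y. x \<in> K \<Longrightarrow> y \<in> K \<Longrightarrow> le x y \<Longrightarrow> le y x \<Longrightarrow> x = y" using po unfolding is_poset_def by blast
  have trans: "\<And>x y z. x \<in> K \<Longrightarrow> y \<in> K \<Longrightarrow> z \<in> K \<Longrightarrow> le x y \<Longrightarrow> le y z \<Longrightarrow> le x z" using po unfolding is_poset_def by blast
  have t: "t \<in> K" "\<And>y. y \<in> K \<Longrightarrow> le y t" using lat_top[OF fin lat] unfolding t_def by auto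
  have bo: "bo \<in> K" "\<And>y. y \<in> K \<Longrightarrow> le bo y" using lat_bot[OF fin lat] unfolding bo_def by auto
  have bot: "bo \<noteq> t"
  proof
    assume "bo = t"
    then have "K \<subseteq> {t}" using t bo anti by blast
    then have "card K \<le> card {t}" by (intro card_mono) auto
    then have "card K \<le> 1" by simp
    then show False using c2 by simp
  qed
  define C where "C = {y\<in>K. upper_covers K le t y}"
  have finC: "finite C" unfolding C_def using fin by simp
  have cardC: "card C \<noteq> 1" using nji t unfolding C_def t_def join_irreducible_def by simp
  obtain c1 where c1: "c1 \<in> C" using chain_down[OF po fin t(1) bo(1) bo(2)[OF t(1)] bot] unfolding C_def by blast
  obtain c2 where c2C: "c2 \<in> C" "c2 \<noteq> c1" using ex_other[OF finC c1 cardC] by blast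
  have Ccov: "\<And>c. c \<in> C \<Longrightarrow> c \<in> K \<and> le c t \<and> c \<noteq> t \<and> (\<forall>z\<in>K. le c z \<and> z \<noteq> c \<and> le z t \<longrightarrow> z = t)"
    unfolding C_def upper_covers_def by blast
  have Cinc: "\<And>c c'. c \<in> C \<Longrightarrow> c' \<in> C \<Longrightarrow> le c c' \<Longrightarrow> c = c'"
    using Ccov by blast
  have Cbo: "\<And>c. c \<in> C \<Longrightarrow> c \<noteq> bo"
  proof -
    fix c assume c: "c \<in> C"
    show "c \<noteq> bo"
    proof
      assume "c = bo"
      obtain c' where "c' \<in> C" "c' \<noteq> c" using ex_other[OF finC c cardC] by blast
      then show False using Cinc[OF c] bo Ccov \<open>c = bo\<close> by metis
    qed
  qed
  show ?thesis
  proof (cases "\<exists>c\<in>C. join_irreducible K le c")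
    case True
    then obtain c where c: "c \<in> C" "join_irreducible K le c" by blast
    have uc: "upper_covers K le t c" using c unfolding C_def by blast
    have "up_set K le c = {c, t}" using up_set_top[OF po uc t(2)] .
    then have "card (up_set K le c) = 2" using Ccov[OF c(1)] by simp
    moreover have "card C \<ge> 2"
    proof -
      have "card {c1,c2} \<le> card C" using c1 c2C finC by (intro card_mono) auto
      then show ?thesis using c2C by simp
    qed
    moreover have "card ({bo,t} \<union> C) = 2 + card C"
    proof -
      have "{bo,t} \<inter> C = {}" using Cbo Ccov by blast
      then show ?thesis using card_Un_disjoint[of "{bo,t}" C] finC bot by simp
    qed
    moreover have "card ({bo,t} \<union> C) \<le> card K" using fin bo t Ccov by (intro card_mono) auto
    ultimately have "2 * card (up_set K le c) \<le> card K" by simp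
    moreover have "c \<in> K - {bo, t}" using Ccov[OF c(1)] Cbo[OF c(1)] by blast
    ultimately show ?thesis using c(2) unfolding t_def bo_def by blast
  next
    case False
    define A where "A = (\<lambda>c. {y\<in>K. upper_covers K le c y})"
    have finA: "\<And>c. finite (A c)" unfolding A_def using fin by simp
    have Acov: "\<And>c y. y \<in> A c \<Longrightarrow> y \<in> K \<and> le y c \<and> y \<noteq> c \<and> (\<forall>z\<in>K. le y z \<and> z \<noteq> y \<and> le z c \<longrightarrow> z = c)"
      unfolding A_def upper_covers_def by blast
    have A2: "\<And>c. c \<in> C \<Longrightarrow> card (A c) \<ge> 2"
    proof -
      fix c assume c: "c \<in> C"
      have "card (A c) \<noteq> 1" using False c Ccov unfolding A_def join_irreducible_def by auto
      moreover have "A c \<noteq> {}"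
        using chain_down[OF po fin _ bo(1) bo(2) Cbo[OF c, symmetric]] Ccov[OF c] unfolding A_def by blast
      ultimately show "card (A c) \<ge> 2" using finA[of c]
        by (metis One_nat_def Suc_1 Suc_leI card_gt_0_iff less_le)
    qed
    have G1: "\<And>c u v. u \<in> A c \<Longrightarrow> v \<in> A c \<Longrightarrow> u \<noteq> v \<Longrightarrow> \<not> le u v"
      using Acov by blast
    have G3: "\<And>c c' u v. c \<in> C \<Longrightarrow> c' \<in> C \<Longrightarrow> c \<noteq> c' \<Longrightarrow> u \<in> A c \<Longrightarrow> v \<in> A c \<Longrightarrow> u \<noteq> v
              \<Longrightarrow> le u c' \<Longrightarrow> le v c' \<Longrightarrow> False"
    proof -
      fix c c' u v assume h: "c \<in> C" "c' \<in> C" "c \<noteq> c'" "u \<in> A c" "v \<in> A c" "u \<noteq> v" "le u c'" "le v c'"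
      obtain s where s: "is_lub K le u v s" using lat Acov[OF h(4)] Acov[OF h(5)] unfolding is_lattice_def by blast
      have sK: "s \<in> K" "le u s" "le v s" using s unfolding is_lub_def by auto
      have "le s c" using s Acov[OF h(4)] Acov[OF h(5)] Ccov[OF h(1)] unfolding is_lub_def by blast
      have "le s c'" using s h Ccov[OF h(2)] unfolding is_lub_def by blast
      have "s \<noteq> u" using G1[OF h(5) h(4)] h(6) sK by metis
      then have "s = c" using Acov[OF h(4)] sK \<open>le s c\<close> by blast
      then show False using Cinc[OF h(1) h(2)] \<open>le s c'\<close> h(3) by simp
    qed
    have Abo: "\<And>c. c \<in> C \<Longrightarrow> bo \<notin> A c"
    proof
      fix c assume c: "c \<in> C" and b: "bo \<in> A c"
      obtain v where "v \<in> A c" "v \<noteq> bo" using ex_other[OF finA b] A2[OF c] by fastforce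
      then show False using G1[OF b] bo Acov by blast
    qed
    have At: "\<And>c. c \<in> C \<Longrightarrow> t \<notin> A c" using Acov Ccov anti t by metis
    have AC: "\<And>c. c \<in> C \<Longrightarrow> A c \<inter> C = {}"
    proof -
      fix c assume c: "c \<in> C"
      show "A c \<inter> C = {}"
      proof (rule ccontr)
        assume "A c \<inter> C \<noteq> {}"
        then obtain y where y: "y \<in> A c" "y \<in> C" by blast
        show False using Ccov[OF y(2)] Acov[OF y(1)] Ccov[OF c] by blast
      qed
    qed
    define A1 where "A1 = A c1"
    define A2' where "A2' = A c2"
    have int1: "card (A1 \<inter> A2') \<le> 1"
    proof (rule ccontr)
      assume "\<not> ?thesis"
      then have "card (A1 \<inter> A2') \<ge> 2" by simp
      then obtain u v where "u \<in> A1 \<inter> A2'" "v \<in> A1 \<inter> A2'" "u \<noteq> v"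
        by (metis Suc_1 card_le_Suc_iff numeral_2_eq_2 insert_iff)
      then show False using G3[OF c1 c2C(1) c2C(2)[symmetric], of u v] Acov unfolding A1_def A2'_def by blast
    qed
    have cA1: "card A1 \<ge> 2" "card A2' \<ge> 2" using A2 c1 c2C unfolding A1_def A2'_def by auto
    have un: "card (A1 \<union> A2') + card (A1 \<inter> A2') = card A1 + card A2'"
      using card_Un_Int[OF finA finA] unfolding A1_def A2'_def by simp
    have cC: "card C \<ge> 2"
    proof -
      have "card {c1,c2} \<le> card C" using c1 c2C finC by (intro card_mono) auto
      then show ?thesis using c2C by simp
    qed
    define S where "S = {bo,t} \<union> C \<union> (A1 \<union> A2')"
    have SK: "S \<subseteq> K" unfolding S_def A1_def A2'_def A_def C_def using bo t by auto
    have cS: "card S = 2 + card C + card (A1 \<union> A2')"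
    proof -
      have d1: "({bo,t} \<union> C) \<inter> (A1 \<union> A2') = {}"
        using Abo At AC c1 c2C unfolding A1_def A2'_def by blast
      have d2: "{bo,t} \<inter> C = {}" using Cbo Ccov by blast
      have "card S = card ({bo,t} \<union> C) + card (A1 \<union> A2')"
        unfolding S_def using d1 finC finA by (intro card_Un_disjoint) (auto simp: A1_def A2'_def)
      also have "card ({bo,t} \<union> C) = 2 + card C" using d2 finC bot by (simp add: card_Un_disjoint)
      finally show ?thesis by simp
    qed
    have cSK: "card S \<le> card K" using card_mono[OF fin SK] .
    have eqs: "card C = 2" "card (A1 \<inter> A2') = 1" "card A1 = 2" "card A2' = 2" "card S = card K"
      using cS cSK c7 un int1 cA1 cC by linarith+
    have KS: "K = S" using card_subset_eq[OF fin SK eqs(5)] by simp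
    have Ceq: "C = {c1, c2}"
    proof -
      have "{c1,c2} \<subseteq> C" using c1 c2C by auto
      moreover have "card {c1,c2} = card C" using eqs c2C by simp
      ultimately show ?thesis using card_subset_eq[OF finC] by metis
    qed
    obtain u where u: "A1 \<inter> A2' = {u}" using eqs(2) card_1_singletonE by blast
    obtain v where v: "A1 = {u, v}" "v \<noteq> u"
    proof -
      obtain p q where pq: "A1 = {p,q}" "p \<noteq> q" using eqs(3) card_2_iff by metis
      have "u \<in> A1" using u by blast
      then show ?thesis using that pq by blast
    qed
    obtain w where w: "A2' = {u, w}" "w \<noteq> u"
    proof -
      obtain p q where pq: "A2' = {p,q}" "p \<noteq> q" using eqs(4) card_2_iff by metis
      have "u \<in> A2'" using u by blast
      then show ?thesis using that pq by blast
    qed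
    have vA: "v \<in> A c1" "u \<in> A c1" "u \<in> A c2" "w \<in> A c2" using v w unfolding A1_def A2'_def by auto
    have vw: "v \<noteq> w" using u v w by auto
    have Kis: "K = {bo, t, c1, c2, u, v, w}" using KS Ceq v w unfolding S_def by auto
    have c12: "c1 \<noteq> c2" using c2C by simp
    have P1: "\<not> le v c2"
      using G3[OF c1 c2C(1) c12 vA(2) vA(1) v(2)[symmetric]] Acov[OF vA(3)] by blast
    have vK: "v \<in> K" "c1 \<in> K" "c2 \<in> K" "u \<in> K" "w \<in> K" using Kis by auto
    have up: "up_set K le v = {v, c1, t}"
    proof
      show "up_set K le v \<subseteq> {v, c1, t}"
      proof
        fix y assume y: "y \<in> up_set K le v"
        then have yK: "y \<in> K" and vy: "le v y" unfolding up_set_def by auto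
        have "y \<noteq> bo" using vy anti bo vK Abo[OF c1] vA(1) by metis
        moreover have "y \<noteq> c2" using vy P1 by blast
        moreover have "y \<noteq> u" using vy G1[OF vA(1) vA(2) v(2)] by blast
        moreover have "y \<noteq> w" using vy P1 trans Acov[OF vA(4)] vK by metis
        ultimately show "y \<in> {v, c1, t}" using yK Kis by blast
      qed
      show "{v, c1, t} \<subseteq> up_set K le v"
        unfolding up_set_def using vK t refl Acov[OF vA(1)] by auto
    qed
    have dd: "v \<noteq> c1" using Acov[OF vA(1)] by blast
    have dd2: "v \<noteq> t" using At[OF c1] vA(1) by blast
    have dd3: "c1 \<noteq> t" using Ccov[OF c1] by blast
    have cup: "card (up_set K le v) = 3"
      unfolding up using dd dd2 dd3 by simp
    have below: "\<And>y. y \<in> K \<Longrightarrow> le y v \<Longrightarrow> y \<noteq> v \<Longrightarrow> y = bo"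
    proof -
      fix y assume yK: "y \<in> K" and yv: "le y v" and ne: "y \<noteq> v"
      have vc1: "le v c1" using Acov[OF vA(1)] by blast
      have "y \<noteq> t" using yv vc1 anti trans t vK Ccov[OF c1] by metis
      moreover have "y \<noteq> c1" using yv vc1 anti vK Acov[OF vA(1)] by metis
      moreover have "y \<noteq> c2" using yv vc1 trans vK Cinc[OF c2C(1) c1] c12 by metis
      moreover have "y \<noteq> u" using yv G1[OF vA(2) vA(1)] v(2) by metis
      moreover have "y \<noteq> w"
      proof
        assume "y = w"
        then have "le w c1" using yv vc1 trans vK by metis
        then show False using G3[OF c2C(1) c1 c12[symmetric] vA(3) vA(4) w(2)[symmetric]] Acov[OF vA(2)] by blast
      qed
      ultimately show "y = bo" using yK Kis ne by blast
    qed
    have "{y\<in>K. upper_covers K le v y} = {bo}"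
    proof
      show "{y\<in>K. upper_covers K le v y} \<subseteq> {bo}" using below unfolding upper_covers_def by blast
      have "bo \<noteq> v" using Abo[OF c1] vA(1) by blast
      then have "upper_covers K le v bo" unfolding upper_covers_def using bo vK below by blast
      then show "{bo} \<subseteq> {y\<in>K. upper_covers K le v y}" using bo by blast
    qed
    then have "join_irreducible K le v" unfolding join_irreducible_def using vK by simp
    moreover have "v \<in> K - {bo, t}" using vK Abo[OF c1] At[OF c1] vA(1) by blast
    moreover have "2 * card (up_set K le v) \<le> card K" using cup eqs cS un by linarith
    ultimately show ?thesis unfolding bo_def t_def by blast
  qed
qed




lemma DESC:
  assumes fin: "finite K" and lat: "is_lattice K le"
    and tji: "join_irreducible K le (top_el K le)"
  obtains c where "c \<in> K" "upper_covers K le (top_el K le) c"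
    "{y\<in>K. upper_covers K le (top_el K le) y} = {c}"
    "\<forall>y\<in>K. y \<noteq> top_el K le \<longrightarrow> le y c"
    "K = insert (top_el K le) {y\<in>K. le y c}" "top_el K le \<notin> {y\<in>K. le y c}"
    "card K = card {y\<in>K. le y c} + 1"
    "is_lattice {y\<in>K. le y c} le"
    "\<forall>y\<in>{y\<in>K. le y c}. join_irreducible K le y \<longleftrightarrow> join_irreducible {y\<in>K. le y c} le y"
    "\<forall>y\<in>{y\<in>K. le y c}. card (up_set K le y) = card (up_set {y\<in>K. le y c} le y) + 1"
    "top_el {y\<in>K. le y c} le = c" "bottom {y\<in>K. le y c} le = bottom K le"
proof -
  define t where "t = top_el K le"
  have po: "is_poset K le" using lat by (rule lat_poset)
  have t: "t \<in> K" "\<And>y. y \<in> K \<Longrightarrow> le y t" using lat_top[OF fin lat] unfolding t_def by auto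
  have bo: "bottom K le \<in> K" "\<And>y. y \<in> K \<Longrightarrow> le (bottom K le) y" using lat_bot[OF fin lat] by auto
  have "card {y\<in>K. upper_covers K le t y} = 1" using tji unfolding join_irreducible_def t_def by simp
  then obtain c where cc: "{y\<in>K. upper_covers K le t y} = {c}" using card_1_singletonE by blast
  then have c: "c \<in> K" "upper_covers K le t c" by auto
  have ct: "le c t" "c \<noteq> t" using c unfolding upper_covers_def by auto
  have d2: "\<forall>y\<in>K. y \<noteq> t \<longrightarrow> le y c"
  proof (intro ballI impI)
    fix y assume y: "y \<in> K" "y \<noteq> t"
    obtain w where w: "w \<in> K" "upper_covers K le t w" "le y w"
      using chain_down[OF po fin t(1) y(1) t(2)[OF y(1)] y(2)] by blast
    then have "w \<in> {y\<in>K. upper_covers K le t y}" by blast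
    then have "w = c" unfolding cc by blast
    then show "le y c" using w by blast
  qed
  define Kc where "Kc = {y\<in>K. le y c}"
  have tn: "t \<notin> Kc" unfolding Kc_def using po_refl[OF po] po_antisym[OF po] po_trans[OF po] ct po t c by blast
  have Keq: "K = insert t Kc" unfolding Kc_def using d2 t by blast
  have finKc: "finite Kc" unfolding Kc_def using fin by simp
  have cardK: "card K = card Kc + 1" using Keq tn finKc by simp
  have latKc: "is_lattice Kc le"
  proof (rule sub_lattice[OF lat])
    show "Kc \<subseteq> K" unfolding Kc_def by blast
    show "Kc \<noteq> {}" unfolding Kc_def using po_refl[OF po] po_antisym[OF po] po_trans[OF po] c po by blast
    fix x y s assume x: "x \<in> Kc" and y: "y \<in> Kc"
    show "is_lub K le x y s \<Longrightarrow> s \<in> Kc" using x y c unfolding Kc_def is_lub_def by blast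
    show "is_glb K le x y s \<Longrightarrow> s \<in> Kc" using po_refl[OF po] po_antisym[OF po] po_trans[OF po] x y c po unfolding Kc_def is_glb_def by blast
  qed
  have cov: "\<And>y. y \<in> Kc \<Longrightarrow> {z\<in>K. upper_covers K le y z} = {z\<in>Kc. upper_covers Kc le y z}"
  proof -
    fix y assume y: "y \<in> Kc"
    show "{z\<in>K. upper_covers K le y z} = {z\<in>Kc. upper_covers Kc le y z}"
    proof
      show "{z\<in>K. upper_covers K le y z} \<subseteq> {z\<in>Kc. upper_covers Kc le y z}"
      proof
        fix z assume z: "z \<in> {z\<in>K. upper_covers K le y z}"
        then have zK: "z \<in> K" "le z y" using z unfolding upper_covers_def by auto
        have yK: "y \<in> K" "le y c" using y unfolding Kc_def by auto
        have "le z c" using po_trans[OF po zK(1) yK(1) c(1) zK(2) yK(2)] .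
        then have "z \<in> Kc" using zK unfolding Kc_def by blast
        moreover have "Kc \<subseteq> K" unfolding Kc_def by blast
        ultimately show "z \<in> {z\<in>Kc. upper_covers Kc le y z}"
          using covers_sub[of K le y z Kc] z y by blast
      qed
      show "{z\<in>Kc. upper_covers Kc le y z} \<subseteq> {z\<in>K. upper_covers K le y z}"
      proof
        fix z assume z: "z \<in> {z\<in>Kc. upper_covers Kc le y z}"
        have yK: "y \<in> K" "le y c" using y unfolding Kc_def by auto
        have zc: "z \<in> K" "le z y" "z \<noteq> y" using z unfolding upper_covers_def Kc_def by auto
        have "\<not> (\<exists>w\<in>K. le z w \<and> w \<noteq> z \<and> le w y \<and> w \<noteq> y)"
        proof
          assume "\<exists>w\<in>K. le z w \<and> w \<noteq> z \<and> le w y \<and> w \<noteq> y"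
          then obtain w where w: "w \<in> K" "le z w" "w \<noteq> z" "le w y" "w \<noteq> y" by blast
          have "le w c" using po_trans[OF po w(1) yK(1) c(1) w(4) yK(2)] .
          then have "w \<in> Kc" using w unfolding Kc_def by blast
          then show False using z w unfolding upper_covers_def by blast
        qed
        then show "z \<in> {z\<in>K. upper_covers K le y z}" using zc yK unfolding upper_covers_def by blast
      qed
    qed
  qed
  have ji: "\<forall>y\<in>Kc. join_irreducible K le y \<longleftrightarrow> join_irreducible Kc le y"
    using cov unfolding join_irreducible_def Kc_def by auto
  have up: "\<forall>y\<in>Kc. card (up_set K le y) = card (up_set Kc le y) + 1"
  proof
    fix y assume y: "y \<in> Kc"
    have "up_set K le y = insert t (up_set Kc le y)"
      using Keq y t unfolding up_set_def Kc_def by auto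
    moreover have "t \<notin> up_set Kc le y" using tn unfolding up_set_def by blast
    moreover have "finite (up_set Kc le y)" using finKc unfolding up_set_def by simp
    ultimately show "card (up_set K le y) = card (up_set Kc le y) + 1" by simp
  qed
  have topc: "top_el Kc le = c"
    using po_refl[OF po] po_antisym[OF po] po_trans[OF po] top_unique[OF lat_poset[OF latKc]] c po unfolding Kc_def by blast
  have botc: "bottom Kc le = bottom K le"
  proof -
    have "top_el Kc (\<lambda>x y. le y x) = bottom K le"
      using top_unique[OF flip_poset[OF lat_poset[OF latKc]]] bo d2 c
      unfolding Kc_def by (metis (no_types, lifting) ct(2) mem_Collect_eq)
    then show ?thesis by (simp add: bottom_flip)
  qed
  show ?thesis
    using that[OF c(1) c(2)[unfolded t_def] cc[unfolded t_def] d2[unfolded t_def] Keq[unfolded Kc_def t_def] tn[unfolded Kc_def t_def]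
        cardK[unfolded Kc_def] latKc[unfolded Kc_def] ji[unfolded Kc_def] up[unfolded Kc_def]
        topc[unfolded Kc_def] botc[unfolded Kc_def]] unfolding t_def by blast
qed




lemma block_Kc:
  assumes bl: "block L le K a b" and po: "is_poset L le"
    and cc: "{y\<in>K. upper_covers K le b y} = {c}" and cK: "c \<in> K" and ac: "a \<noteq> c"
    and bc: "le c b" "c \<noteq> b"
    and Keq: "K = insert b {y\<in>K. le y c}"
  shows "block L le {y\<in>K. le y c} a c"
proof -
  have KL: "K \<subseteq> L" and ab: "a \<in> K" "b \<in> K" and ord: "\<forall>y\<in>K. le a y \<and> le y b"
    using bl unfolding block_def by auto
  have bnc: "\<not> le b c" using bc po_antisym[OF po] KL ab cK by blast
  have s1: "{y\<in>K. le y c} \<subseteq> L" using KL by blast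
  have s2: "a \<in> {y\<in>K. le y c}" using ab ord cK by blast
  have s3: "c \<in> {y\<in>K. le y c}" using cK po_refl[OF po] KL by blast
  have s4: "\<forall>y\<in>{y\<in>K. le y c}. le a y \<and> le y c" using ord by blast
  have s5: "\<not> upper_covers L le x y \<and> \<not> upper_covers L le y x"
    if x: "x \<in> {y\<in>K. le y c} - {a, c}" and y: "y \<in> L - {y\<in>K. le y c}" for x y
  proof -
    have xb: "x \<noteq> b" using x bnc by blast
    show ?thesis
    proof (cases "y \<in> K")
      case False
      then show ?thesis using bl x y xb unfolding block_def by blast
    next
      case True
      then have yb: "y = b" using y Keq by blast
      have "\<not> upper_covers L le x b"
      proof
        assume "upper_covers L le x b"
        then have "le b x" unfolding upper_covers_def by blast
        then have "le b c" using x po_trans[OF po] KL ab cK by blast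
        then show False using bnc by blast
      qed
      moreover have "\<not> upper_covers L le b x"
      proof
        assume "upper_covers L le b x"
        then have "upper_covers K le b x" using covers_sub[OF _ KL] ab x by blast
        then have "x \<in> {y\<in>K. upper_covers K le b y}" using x by blast
        then have "x = c" unfolding cc by blast
        then show False using x by blast
      qed
      ultimately show ?thesis using yb by simp
    qed
  qed
  show ?thesis unfolding block_def using s1 s2 s3 s4 s5 ac by blast
qed

theorem theorem2p15:
  fixes L :: "'a set" and le :: "'a \<Rightarrow> 'a \<Rightarrow> bool" and L' :: "'a set"
  assumes "min_counterexample L le"
    and "L' \<subseteq> L"
    and "is_lattice L' le"
    and "(3 < card L' \<and> card L' < 8) \<or>
         (2 < card L' \<and> card L' + 2 < card L \<and>
          (\<exists>d. dual_atom L le d \<and> le d (top_el L' le)))"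
  shows "\<exists>x \<in> L' - {bottom L' le, top_el L' le}. \<exists>y \<in> L - L'.
           upper_covers L le x y \<or> upper_covers L le y x"
proof (rule ccontr)
  assume nc: "\<not> ?thesis"
  note min = assms(1) and sub = assms(2) and latK = assms(3) and hyp = assms(4)
  have ce: "counterexample L le" using min unfolding min_counterexample_def by blast
  then have fin: "finite L" and lat: "is_lattice L le"
    and ceJ: "\<And>j. join_irreducible L le j \<Longrightarrow> card L < 2 * card (up_set L le j)"
    unfolding counterexample_def by auto
  have po: "is_poset L le" using lat by (rule lat_poset)
  have finK: "finite L'" using fin sub finite_subset by blast
  define a where "a = bottom L' le"
  define b where "b = top_el L' le"
  have a: "a \<in> L'" "\<And>y. y \<in> L' \<Longrightarrow> le a y" using lat_bot[OF finK latK] unfolding a_def by auto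
  have b: "b \<in> L'" "\<And>y. y \<in> L' \<Longrightarrow> le y b" using lat_top[OF finK latK] unfolding b_def by auto
  have poK: "is_poset L' le" using latK by (rule lat_poset)
  have c3: "card L' \<ge> 3" using hyp by auto
  have ab: "a \<noteq> b"
  proof
    assume "a = b"
    then have "L' \<subseteq> {a}" using a b po_antisym[OF poK] by blast
    then have "card L' \<le> card {a}" by (intro card_mono) auto
    then have "card L' \<le> 1" by simp
    then show False using c3 by simp
  qed
  have bl: "block L le L' a b"
    unfolding block_def using sub a b ab nc unfolding a_def b_def by blast
  have aji: "\<not> join_irreducible L' le a" using bot_not_ji[of L' le a, OF _ _ poK] a by blast
  show False
  proof (cases "3 < card L' \<and> card L' < 8")
    case True
    note ci = True
    show False
    proof (cases "join_irreducible L' le b")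
      case False
      obtain x where x: "x \<in> L' - {a, b}" "join_irreducible L' le x" "2 * card (up_set L' le x) \<le> card L'"
        using SL0[OF finK latK _ _ False[unfolded b_def]] True unfolding a_def b_def by auto
      show False using CORE[OF min bl x] .
    next
      case bji: True
      obtain c where c: "c \<in> L'" "upper_covers L' le b c"
        "{y\<in>L'. upper_covers L' le b y} = {c}"
        "\<forall>y\<in>L'. y \<noteq> b \<longrightarrow> le y c"
        "L' = insert b {y\<in>L'. le y c}" "b \<notin> {y\<in>L'. le y c}"
        "card L' = card {y\<in>L'. le y c} + 1"
        "is_lattice {y\<in>L'. le y c} le"
        "\<forall>y\<in>{y\<in>L'. le y c}. join_irreducible L' le y \<longleftrightarrow> join_irreducible {y\<in>L'. le y c} le y"
        "\<forall>y\<in>{y\<in>L'. le y c}. card (up_set L' le y) = card (up_set {y\<in>L'. le y c} le y) + 1"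
        "top_el {y\<in>L'. le y c} le = c" "bottom {y\<in>L'. le y c} le = a"
        by (rule DESC[OF finK latK bji[unfolded b_def], folded b_def a_def])
      have cb: "le c b" "c \<noteq> b" using c(2) unfolding upper_covers_def by auto
      show False
      proof (cases "join_irreducible L' le c")
        case True
        have "up_set L' le c = {c, b}" using up_set_top[OF poK c(2) b(2)] .
        then have "card (up_set L' le c) = 2" using cb by simp
        moreover have "c \<in> L' - {a, b}" using c(1) cb True aji by blast
        ultimately show False using CORE[OF min bl _ True] ci by simp
      next
        case False
        define Kc where "Kc = {y\<in>L'. le y c}"
        have cKc: "c \<in> Kc" using po_refl[OF poK] po_antisym[OF poK] po_trans[OF poK] c(1) poK unfolding Kc_def by blast
        have nji: "\<not> join_irreducible Kc le (top_el Kc le)"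
          using c(9,11) False cKc unfolding Kc_def by simp
        have finKc: "finite Kc" unfolding Kc_def using finK by simp
        have cK: "card Kc \<ge> 2" "card Kc \<le> 7" using c(7) True unfolding Kc_def by auto
        obtain x where x: "x \<in> Kc - {a, c}" "join_irreducible Kc le x" "2 * card (up_set Kc le x) \<le> card Kc"
          using SL0[OF finKc c(8)[folded Kc_def] cK nji] c(11,12) unfolding Kc_def by auto
        have ac: "a \<noteq> c"
        proof
          assume "a = c"
          then have "Kc \<subseteq> {a}" using a po_antisym[OF poK] unfolding Kc_def by blast
          then have "card Kc \<le> card {a}" by (intro card_mono) auto
          then show False using cK(1) by simp
        qed
        have blc: "block L le Kc a c" unfolding Kc_def
          by (rule block_Kc[OF bl po c(3) c(1) ac cb c(5)])
        show False using CORE[OF min blc x] .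
      qed
    qed
  next
    case False
    then have h2: "card L' + 2 < card L" and d: "\<exists>d. dual_atom L le d \<and> le d b"
      using hyp unfolding b_def by auto
    obtain d where d: "dual_atom L le d" "le d b" using d by blast
    have "\<exists>x \<in> L' - {a, b}. join_irreducible L' le x \<and> 2 * card (up_set L' le x) \<le> card L' + 1"
    proof -
      have c1: "card L' > 1" "card L' < card L" using c3 h2 by auto
      obtain y where y: "join_irreducible L' le y" "2 * card (up_set L' le y) \<le> card L'"
        using transfer[OF min finK latK c1] by blast
      show ?thesis
      proof (cases "y = b")
        case False
        have "y \<in> L'" using y unfolding join_irreducible_def by blast
        then show ?thesis using y False aji by (metis DiffI insertE singletonD le_SucI Suc_eq_plus1)
      next
        case True
        then have bji: "join_irreducible L' le (top_el L' le)" using y unfolding b_def by simp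
        obtain c where c: "c \<in> L'" "upper_covers L' le b c"
          "{y\<in>L'. upper_covers L' le b y} = {c}"
          "\<forall>y\<in>L'. y \<noteq> b \<longrightarrow> le y c"
          "L' = insert b {y\<in>L'. le y c}" "b \<notin> {y\<in>L'. le y c}"
          "card L' = card {y\<in>L'. le y c} + 1"
          "is_lattice {y\<in>L'. le y c} le"
          "\<forall>y\<in>{y\<in>L'. le y c}. join_irreducible L' le y \<longleftrightarrow> join_irreducible {y\<in>L'. le y c} le y"
          "\<forall>y\<in>{y\<in>L'. le y c}. card (up_set L' le y) = card (up_set {y\<in>L'. le y c} le y) + 1"
          "top_el {y\<in>L'. le y c} le = c" "bottom {y\<in>L'. le y c} le = a"
          by (rule DESC[OF finK latK bji, folded b_def a_def])
        have cb: "le c b" "c \<noteq> b" using c(2) unfolding upper_covers_def by auto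
        show ?thesis
        proof (cases "join_irreducible L' le c")
          case True
          have "up_set L' le c = {c, b}" using up_set_top[OF poK c(2) b(2)] .
          then have "card (up_set L' le c) = 2" using cb by simp
          moreover have "c \<in> L' - {a, b}" using c(1) cb True aji by blast
          ultimately show ?thesis using True c3 by auto
        next
          case False
          define Kc where "Kc = {y\<in>L'. le y c}"
          have cKc: "c \<in> Kc" using po_refl[OF poK] po_antisym[OF poK] po_trans[OF poK] c(1) poK unfolding Kc_def by blast
          have finKc: "finite Kc" unfolding Kc_def using finK by simp
          have cK: "card Kc > 1" "card Kc < card L" using c(7) c3 h2 unfolding Kc_def by auto
          obtain z where z: "join_irreducible Kc le z" "2 * card (up_set Kc le z) \<le> card Kc"
            using transfer[OF min finKc c(8)[folded Kc_def] cK] by blast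
          have zK: "z \<in> Kc" using z unfolding join_irreducible_def by blast
          have zc: "z \<noteq> c" using z c(9) False cKc unfolding Kc_def by auto
          have za: "z \<noteq> a" using z c(9) aji zK unfolding Kc_def by auto
          have zb: "z \<noteq> b" using zK c(6) unfolding Kc_def by blast
          have "join_irreducible L' le z" using z c(9) zK unfolding Kc_def by simp
          moreover have "2 * card (up_set L' le z) \<le> card L' + 1"
            using z(2) c(10) c(7) zK unfolding Kc_def by simp
          moreover have "z \<in> L' - {a, b}" using zK za zb unfolding Kc_def by blast
          ultimately show ?thesis by blast
        qed
      qed
    qed
    then obtain x where x: "x \<in> L' - {a, b}" "join_irreducible L' le x" "2 * card (up_set L' le x) \<le> card L' + 1"
      by blast
    have "join_irreducible L le x" using F3_ji[OF po fin bl x(1)] x(2) by simp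
    then have A: "card L < 2 * card (up_set L le x)" by (rule ceJ)
    have B: "card (up_set L le x) + 1 = card (up_set L' le x) + card (up_set L le b)"
      using F4[OF po fin bl x(1)] .
    define T where "T = top_el L le"
    have T: "T \<in> L" "\<And>y. y \<in> L \<Longrightarrow> le y T" using lat_top[OF fin lat] unfolding T_def by auto
    have dT: "upper_covers L le T d" using d(1) unfolding dual_atom_def T_def by simp
    have bL: "b \<in> L" using b sub by blast
    have "card (up_set L le b) \<le> 2"
    proof (cases "b = T")
      case True
      have "up_set L le b \<subseteq> {T}" using po_refl[OF po] po_antisym[OF po] po_trans[OF po] True T po unfolding up_set_def by blast
      then have "card (up_set L le b) \<le> card {T}" by (intro card_mono) auto
      then show ?thesis by simp
    next
      case False
      have "b = d" using dT d(2) T bL False unfolding upper_covers_def by blast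
      then have "up_set L le b = {b, T}" using up_set_top[OF po dT T(2)] by simp
      then show ?thesis by (cases "b = T") auto
    qed
    then show False using A B x(3) h2 by simp
  qed
qed


end
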